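(* Assume the lifted model described in the context is well-posed and topologically detectable, and let $\mathcal{G}_T$ be its topology. Let $i\neq j$ be vertices with $i\in N_{\mathcal{G}_T}(j,2)$ and $i\notin N_{\mathcal{G}_T}(j)$ (i.e. $i$ and $j$ are strict two-hop neighbors). Then the $T\times T$ matrix $\mathbf{B}_j'\,\Phi_X^{-1}(\omega)\,\mathbf{B}_i$ is Hermitian positive semidefinite, $\mathbf{B}_j'\Phi_X^{-1}(\omega)\mathbf{B}_i\succeq0$, for all $\omega\in[0,2\pi)$ (at which it is defined).
   Context: Model: real $b_{ij}\ge0$ for $i\ne j$, $b_{ii}=0$; for each $i$ a stable scalar filter $g_i$ with $z$-transform $1/\mathsf{S}_i(z)$, $\mathsf{S}_i(z)=\sum_{n=1}^{l}a_{n,i}\big(\frac{2(1-z^{-1})}{\Delta t(1+z^{-1})}\big)^n+\sum_{j\ne i}b_{ij}$; $h_{ij}=b_{ij}g_i$. For a scalar filter $f$ its $T$-lifting is the $T\times T$ matrix filter with $(p,t)$ entry $a\mapsto f(aT+p-t)$, $p,t\in\{0,\dots,T-1\}$. Let $H_{ij}$ be the $T$-lifting of $h_{ij}$ (so $H_{ij}=b_{ij}G_i$ with $G_i$ the lifting of $g_i$, and $H_{ii}=\mathbf{0}$), with frequency response $\mathsf{H}_{ij}(\omega)=\sum_a H_{ij}[a]e^{-\mathrm{i}\omega a}$. The lifted processes $X_i$, $E_i$ ($T$-vector valued) satisfy $X_i(k)=\sum_j (H_{ij}*X_j)(k)+E_i(k)$; $E_1,\dots,E_m$ are jointly wide-sense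 stationary, zero-mean and mutually uncorrelated, with power spectral density matrices $\Phi_{E_i}(\omega)$. Stack $X=[X_1',\dots,X_m']'$, $E=[E_1',\dots,E_m']'$ and let $\mathbb{H}(\omega)$ be the $mT\times mT$ block matrix with $(i,j)$ block $\mathsf{H}_{ij}(\omega)$, so $X=\mathbb{H}*X+E$. Well-posed: $\mathbb{I}-\mathbb{H}(\omega)$ is invertible for almost every $\omega$ (so $X=(\mathbb{I}-\mathbb{H})^{-1}E$ and $\Phi_X(\omega)$ denotes the power spectral density of $X$). Topologically detectable: $\Phi_{E_j}(\omega)\succ0$ for every $\omega$ and every $j$. $\mathbf{B}_j\in\mathbb{R}^{mT\times T}$ is the block column matrix whose $j$-th $T\times T$ block is $I_T$ and whose other blocks are zero. Graphs: the LDG $\mathcal{G}$ has vertices $1,\dots,m$ and a directed edge $i\to j$ iff $b_{ji}\ne0$; the children of $j$ are $\mathcal{C}_{\mathcal{G}}(j)=\{k: b_{kj}\neq0\}$. The topology $\mathcal{G}_T$ is the undirected graph with an edge $\{i,j\}$ iff $b_{ij}\neq0$ or $b_{ji}\neq0$; $N_{\mathcal{G}_T}(j)$ is the set of neighbors of $j$ in $\mathcal{G}_T$, and $N_{\mathcal{G}_T}(j,2)=\{i: \text{there is } k \text{ with } \{j,k\},\{i,k\}\text{ edges of }\mathcal{G}_T\}$. *)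

theory Defs
  imports "HOL-Analysis.Analysis" "Jordan_Normal_Form.Schur_Decomposition"
begin

(* Vertices are 0..<m; a T-vector/T x T block is indexed by 0..<T; the stacked
   mT-vector uses index i*T + p for block i, component p. *)

definition cmat_inv :: "complex mat \<Rightarrow> complex mat" where
  "cmat_inv A = (SOME B. B \<in> carrier_mat (dim_row A) (dim_row A) \<and>
      A * B = 1\<^sub>m (dim_row A) \<and> B * A = 1\<^sub>m (dim_row A))"

definition hermitian_cmat :: "complex mat \<Rightarrow> bool" where
  "hermitian_cmat A \<longleftrightarrow> A \<in> carrier_mat (dim_row A) (dim_row A) \<and> mat_adjoint A = A"

definition psd_cmat :: "complex mat \<Rightarrow> bool" where
  "psd_cmat A \<longleftrightarrow> hermitian_cmat A \<and>
     (\<forall>v \<in> carrier_vec (dim_row A). 0 \<le> Re (conjugate v \<bullet> (A *\<^sub>v v)))"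

definition pd_cmat :: "complex mat \<Rightarrow> bool" where
  "pd_cmat A \<longleftrightarrow> hermitian_cmat A \<and>
     (\<forall>v \<in> carrier_vec (dim_row A). v \<noteq> 0\<^sub>v (dim_row A) \<longrightarrow> 0 < Re (conjugate v \<bullet> (A *\<^sub>v v)))"

definition bilin :: "real \<Rightarrow> complex \<Rightarrow> complex" where
  "bilin dt z = 2 * (1 - inverse z) / (of_real dt * (1 + inverse z))"

definition Sden :: "nat \<Rightarrow> (nat \<Rightarrow> nat \<Rightarrow> real) \<Rightarrow> (nat \<Rightarrow> nat \<Rightarrow> real) \<Rightarrow> nat \<Rightarrow> real
                    \<Rightarrow> nat \<Rightarrow> complex \<Rightarrow> complex" where
  "Sden l a b m dt i z = (\<Sum>n = 1..l. of_real (a n i) * bilin dt z ^ n)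
       + of_real (\<Sum>j \<in> {0..<m} - {i}. b i j)"

(* (p,t) entry of the frequency response of the T-lifting of the scalar filter f:
   sum_a f(aT+p-t) e^{-i \<omega> a} *)
definition lift_fr :: "(int \<Rightarrow> real) \<Rightarrow> nat \<Rightarrow> real \<Rightarrow> nat \<Rightarrow> nat \<Rightarrow> complex" where
  "lift_fr f T \<omega> p t = (\<Sum>\<^sub>\<infinity>a\<in>(UNIV::int set).
       of_real (f (a * int T + int p - int t)) * exp (- \<i> * of_real \<omega> * of_int a))"

(* the mT x mT matrix \<bbbH>(\<omega>), (i,j) block = b_ij G_i(\<omega>) *)
definition bigH :: "(nat \<Rightarrow> nat \<Rightarrow> real) \<Rightarrow> (nat \<Rightarrow> int \<Rightarrow> real) \<Rightarrow> nat \<Rightarrow> nat \<Rightarrow> real \<Rightarrow> complex mat" where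
  "bigH b g m T \<omega> = mat (m * T) (m * T) (\<lambda>(r, c).
       of_real (b (r div T) (c div T)) * lift_fr (g (r div T)) T \<omega> (r mod T) (c mod T))"

(* PSD of E: block diagonal since E_1..E_m are mutually uncorrelated *)
definition PhiE_blk :: "(nat \<Rightarrow> real \<Rightarrow> complex mat) \<Rightarrow> nat \<Rightarrow> nat \<Rightarrow> real \<Rightarrow> complex mat" where
  "PhiE_blk PhiE m T \<omega> = mat (m * T) (m * T) (\<lambda>(r, c).
       if r div T = c div T then PhiE (r div T) \<omega> $$ (r mod T, c mod T) else 0)"

(* PSD of X = (I - \<bbbH>)^{-1} E :  \<Phi>_X = (I-\<bbbH>)^{-1} \<Phi>_E (I-\<bbbH>)^{-*} *)
definition PhiX :: "(nat \<Rightarrow> nat \<Rightarrow> real) \<Rightarrow> (nat \<Rightarrow> int \<Rightarrow> real) \<Rightarrow> (nat \<Rightarrow> real \<Rightarrow> complex mat)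
                    \<Rightarrow> nat \<Rightarrow> nat \<Rightarrow> real \<Rightarrow> complex mat" where
  "PhiX b g PhiE m T \<omega> =
     (let M = cmat_inv (1\<^sub>m (m * T) - bigH b g m T \<omega>)
      in M * PhiE_blk PhiE m T \<omega> * mat_adjoint M)"

definition Bsel :: "nat \<Rightarrow> nat \<Rightarrow> nat \<Rightarrow> complex mat" where
  "Bsel m T j = mat (m * T) T (\<lambda>(r, c). if r = j * T + c then 1 else 0)"

definition topo_edge :: "(nat \<Rightarrow> nat \<Rightarrow> real) \<Rightarrow> nat \<Rightarrow> nat \<Rightarrow> bool" where
  "topo_edge b i j \<longleftrightarrow> b i j \<noteq> 0 \<or> b j i \<noteq> 0"

definition nbr :: "(nat \<Rightarrow> nat \<Rightarrow> real) \<Rightarrow> nat \<Rightarrow> nat \<Rightarrow> nat set" where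
  "nbr b m j = {i. i < m \<and> topo_edge b j i}"

definition nbr2 :: "(nat \<Rightarrow> nat \<Rightarrow> real) \<Rightarrow> nat \<Rightarrow> nat \<Rightarrow> nat set" where
  "nbr2 b m j = {i. i < m \<and> (\<exists>k < m. topo_edge b j k \<and> topo_edge b i k)}"

end

theory Submission
  imports Defs
begin

lemma mult_entry:
  assumes "A \<in> carrier_mat n k" "B \<in> carrier_mat k l" "i < n" "j < l"
  shows "(A * B) $$ (i, j) = (\<Sum>u<k. A $$ (i, u) * B $$ (u, j))"
  using assms by (simp add: scalar_prod_def lessThan_atLeast0)

lemma adj_dims: "dim_row (mat_adjoint A) = dim_col A" "dim_col (mat_adjoint A) = dim_row A"
  by (auto simp: mat_adjoint_def)

lemma adj_carrier: assumes "A \<in> carrier_mat n k" shows "mat_adjoint A \<in> carrier_mat k n"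
  using carrier_matD[OF assms] by (intro carrier_matI) (simp_all add: adj_dims)

lemma adj_entry: "i < dim_col A \<Longrightarrow> j < dim_row A \<Longrightarrow> mat_adjoint A $$ (i, j) = cnj (A $$ (j, i))"
  by (simp add: mat_adjoint_def mat_of_rows_def)

lemma adj_mult:
  fixes A B :: "complex mat"
  assumes A: "A \<in> carrier_mat n k" and B: "B \<in> carrier_mat k l"
  shows "mat_adjoint (A * B) = mat_adjoint B * mat_adjoint A"
proof (rule eq_matI)
  fix i j assume ij: "i < dim_row (mat_adjoint B * mat_adjoint A)" "j < dim_col (mat_adjoint B * mat_adjoint A)"
  then have i: "i < l" and j: "j < n" using assms by (auto simp: adj_dims)
  have AB: "A * B \<in> carrier_mat n l" using A B by auto
  have "mat_adjoint (A * B) $$ (i, j) = cnj ((A * B) $$ (j, i))"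
    by (rule adj_entry) (use AB i j in auto)
  also have "\<dots> = cnj (\<Sum>u<k. A $$ (j, u) * B $$ (u, i))"
    by (subst mult_entry[OF A B j i]) (rule refl)
  also have "\<dots> = (\<Sum>u<k. mat_adjoint B $$ (i, u) * mat_adjoint A $$ (u, j))"
    unfolding cnj_sum by (rule sum.cong) (use A B i j in \<open>auto simp: mult.commute adj_dims adj_entry\<close>)
  also have "\<dots> = (mat_adjoint B * mat_adjoint A) $$ (i, j)"
    by (rule mult_entry[OF adj_carrier[OF B] adj_carrier[OF A] i j, symmetric])
  finally show "mat_adjoint (A * B) $$ (i, j) = (mat_adjoint B * mat_adjoint A) $$ (i, j)" .
next
  show "dim_row (mat_adjoint (A * B)) = dim_row (mat_adjoint B * mat_adjoint A)" by (simp add: adj_dims)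
next
  show "dim_col (mat_adjoint (A * B)) = dim_col (mat_adjoint B * mat_adjoint A)" by (simp add: adj_dims)
qed

lemma adj_one: "mat_adjoint (1\<^sub>m n :: complex mat) = 1\<^sub>m n"
  by (rule eq_matI) (simp_all add: adj_dims adj_entry)

lemma adj_adj: "mat_adjoint (mat_adjoint (A :: complex mat)) = A"
  by (rule eq_matI) (simp_all add: adj_dims adj_entry)

lemma sum_reindex_blocks:
  fixes m T :: nat
  shows "(\<Sum>u<m*T. f u) = (\<Sum>k<m. \<Sum>s<T. f (k*T+s))"
proof (induction m)
  case 0 then show ?case by simp
next
  case (Suc m)
  have e: "{..<Suc m * T} = {..<m*T} \<union> {m*T..<m*T+T}"
  proof -
    have "{0..<m*T} \<union> {m*T..<m*T+T} = {0..<m*T+T}" by (rule ivl_disj_un_two(3)) simp_all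
    moreover have "Suc m * T = m*T+T" by simp
    ultimately show ?thesis by (simp only: lessThan_atLeast0)
  qed
  have "(\<Sum>u<Suc m*T. f u) = (\<Sum>u<m*T. f u) + (\<Sum>u\<in>{m*T..<m*T+T}. f u)"
    unfolding e by (rule sum.union_disjoint) auto
  also have "(\<Sum>u\<in>{m*T..<m*T+T}. f u) = (\<Sum>s<T. f (m*T+s))"
  proof -
    have ee: "{m*T..<m*T+T} = {0+m*T..<T+m*T}" by (simp add: add.commute)
    have "(\<Sum>u\<in>{m*T..<m*T+T}. f u) = (\<Sum>s\<in>{0..<T}. f (s + m*T))"
      unfolding ee by (rule sum.shift_bounds_nat_ivl)
    then show ?thesis by (simp only: lessThan_atLeast0 add.commute)
  qed
  also have "(\<Sum>u<m*T. f u) = (\<Sum>k<m. \<Sum>s<T. f (k*T+s))" by (rule Suc.IH)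
  also have "(\<Sum>k<m. \<Sum>s<T. f (k*T+s)) + (\<Sum>s<T. f (m*T+s)) = (\<Sum>k<Suc m. \<Sum>s<T. f (k*T+s))"
    by (rule sum.lessThan_Suc[symmetric])
  finally show ?case .
qed

lemma cmat_inv_unique:
  fixes A B :: "complex mat"
  assumes A: "A \<in> carrier_mat n n" and B: "B \<in> carrier_mat n n"
    and AB: "A * B = 1\<^sub>m n" and BA: "B * A = 1\<^sub>m n"
  shows "cmat_inv A = B"
proof -
  let ?P = "\<lambda>C. C \<in> carrier_mat (dim_row A) (dim_row A) \<and>
      A * C = 1\<^sub>m (dim_row A) \<and> C * A = 1\<^sub>m (dim_row A)"
  have dr: "dim_row A = n" using A by simp
  have "?P B" using B AB BA dr by simp
  then have PC: "?P (cmat_inv A)" unfolding cmat_inv_def by (rule someI)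
  then have C: "cmat_inv A \<in> carrier_mat n n" and CA: "cmat_inv A * A = 1\<^sub>m n"
    using dr by simp_all
  have "cmat_inv A = cmat_inv A * (A * B)" using C AB by simp
  also have "\<dots> = (cmat_inv A * A) * B" using C A B by (simp only: assoc_mult_mat)
  also have "\<dots> = B" using CA B by simp
  finally show ?thesis .
qed

lemma invertible_ex:
  fixes A :: "complex mat"
  assumes A: "A \<in> carrier_mat n n" and inv: "invertible_mat A"
  shows "\<exists>B. B \<in> carrier_mat n n \<and> A * B = 1\<^sub>m n \<and> B * A = 1\<^sub>m n"
proof -
  have "\<exists>B. inverts_mat A B \<and> inverts_mat B A" using inv unfolding invertible_mat_def by (rule conjunct2)
  then obtain B where B: "inverts_mat A B \<and> inverts_mat B A" ..
  have AB: "A * B = 1\<^sub>m (dim_row A)" using B unfolding inverts_mat_def by (rule conjunct1)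
  have BA: "B * A = 1\<^sub>m (dim_row B)" using B unfolding inverts_mat_def by (rule conjunct2)
  have dr: "dim_row A = n" "dim_col A = n" using A by simp_all
  have "dim_col (A * B) = n" using AB dr by simp
  then have c: "dim_col B = n" by simp
  have "dim_col (B * A) = dim_col (1\<^sub>m (dim_row B) :: complex mat)" using BA by (rule arg_cong)
  then have h1: "dim_col A = dim_row B" by (simp only: index_mult_mat(3) index_one_mat(3))
  have h2: "dim_col A = n" by (rule carrier_matD(2)[OF A])
  have r: "dim_row B = n" by (rule trans[OF sym[OF h1] h2])
  have "B \<in> carrier_mat n n" by (rule carrier_matI[OF r c])
  moreover have "A * B = 1\<^sub>m n" using AB dr by simp
  moreover have "B * A = 1\<^sub>m n" using BA r by simp
  ultimately show ?thesis by (intro exI[of _ B] conjI)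
qed

lemma cmat_inv_props:
  fixes A :: "complex mat"
  assumes A: "A \<in> carrier_mat n n" and ex: "\<exists>B. B \<in> carrier_mat n n \<and> A * B = 1\<^sub>m n \<and> B * A = 1\<^sub>m n"
  shows "cmat_inv A \<in> carrier_mat n n" "A * cmat_inv A = 1\<^sub>m n" "cmat_inv A * A = 1\<^sub>m n"
proof -
  from ex obtain B where B: "B \<in> carrier_mat n n \<and> A * B = 1\<^sub>m n \<and> B * A = 1\<^sub>m n" ..
  have e: "cmat_inv A = B" using B by (intro cmat_inv_unique[OF A]) (elim conjE; assumption)+
  show "cmat_inv A \<in> carrier_mat n n" unfolding e using B by (elim conjE)
  show "A * cmat_inv A = 1\<^sub>m n" unfolding e using B by (elim conjE)
  show "cmat_inv A * A = 1\<^sub>m n" unfolding e using B by (elim conjE)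
qed

lemma pd_ex_inv:
  fixes P :: "complex mat"
  assumes P: "P \<in> carrier_mat n n" and pd: "pd_cmat P"
  shows "\<exists>B. B \<in> carrier_mat n n \<and> P * B = 1\<^sub>m n \<and> B * P = 1\<^sub>m n"
proof -
  have "det P \<noteq> 0"
  proof
    assume "det P = 0"
    then obtain v where v: "v \<in> carrier_vec n" "v \<noteq> 0\<^sub>v n" "P *\<^sub>v v = 0\<^sub>v n"
      using det_0_iff_vec_prod_zero_field[OF P] by blast
    have dr: "dim_row P = n" using P by simp
    have pos: "\<forall>v \<in> carrier_vec (dim_row P). v \<noteq> 0\<^sub>v (dim_row P) \<longrightarrow> 0 < Re (conjugate v \<bullet> (P *\<^sub>v v))"
      using pd unfolding pd_cmat_def by (elim conjE)
    have "0 < Re (conjugate v \<bullet> (P *\<^sub>v v))" using bspec[OF pos[unfolded dr] v(1)] v(2) by (rule mp)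
    moreover have "conjugate v \<bullet> (P *\<^sub>v v) = 0" using v(3) v(1)
      by (simp add: scalar_prod_def)
    ultimately show False by simp
  qed
  from det_non_zero_imp_unit[OF P this, of "()"]
  have "P \<in> Units (ring_mat TYPE(complex) n ())" .
  then obtain B where B: "B \<in> carrier_mat n n" "B * P = 1\<^sub>m n" "P * B = 1\<^sub>m n"
    unfolding Units_def ring_mat_simps by blast
  then show ?thesis by blast
qed

lemma conj_mv_swap:
  fixes M :: "complex mat"
  assumes M: "M \<in> carrier_mat n n" and u: "u \<in> carrier_vec n"
  shows "conjugate (M *\<^sub>v u) \<bullet> u = cnj (conjugate u \<bullet> (M *\<^sub>v u))"
  using M u by (simp add: scalar_prod_def mult.commute)

lemma inv_psd:
  fixes P :: "complex mat"
  assumes P: "P \<in> carrier_mat n n" and pd: "pd_cmat P"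
  shows "cmat_inv P \<in> carrier_mat n n" "mat_adjoint (cmat_inv P) = cmat_inv P"
    "\<And>w. w \<in> carrier_vec n \<Longrightarrow> 0 \<le> Re (conjugate w \<bullet> (cmat_inv P *\<^sub>v w))"
proof -
  note ex = pd_ex_inv[OF P pd]
  note Q = cmat_inv_props[OF P ex]
  show Qc: "cmat_inv P \<in> carrier_mat n n" by (rule Q(1))
  have herm: "mat_adjoint P = P" using pd unfolding pd_cmat_def hermitian_cmat_def by (elim conjE)
  have a1: "mat_adjoint (cmat_inv P) * P = 1\<^sub>m n"
    using adj_mult[OF P Qc] Q(2) herm by (simp add: adj_one)
  have a2: "P * mat_adjoint (cmat_inv P) = 1\<^sub>m n"
    using adj_mult[OF Qc P] Q(3) herm by (simp add: adj_one)
  have "cmat_inv P = mat_adjoint (cmat_inv P)"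
    by (rule cmat_inv_unique[OF P adj_carrier[OF Qc] a2 a1])
  then show "mat_adjoint (cmat_inv P) = cmat_inv P" by (rule sym)
  fix w :: "complex vec" assume w: "w \<in> carrier_vec n"
  define u where "u = cmat_inv P *\<^sub>v w"
  have u: "u \<in> carrier_vec n" unfolding u_def using Qc w by simp
  have Pu: "P *\<^sub>v u = w" unfolding u_def
    using assoc_mult_mat_vec[OF P Qc w, symmetric] Q(2) w by simp
  have "conjugate w \<bullet> (cmat_inv P *\<^sub>v w) = conjugate (P *\<^sub>v u) \<bullet> u"
    using Pu u_def by simp
  also have "\<dots> = cnj (conjugate u \<bullet> (P *\<^sub>v u))" by (rule conj_mv_swap[OF P u])
  finally have eq: "Re (conjugate w \<bullet> (cmat_inv P *\<^sub>v w)) = Re (conjugate u \<bullet> (P *\<^sub>v u))" by simp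
  show "0 \<le> Re (conjugate w \<bullet> (cmat_inv P *\<^sub>v w))"
  proof (cases "u = 0\<^sub>v n")
    case True
    then show ?thesis using eq P by (simp add: scalar_prod_def)
  next
    case False
    have dr: "dim_row P = n" using P by simp
    have pos: "\<forall>v \<in> carrier_vec (dim_row P). v \<noteq> 0\<^sub>v (dim_row P) \<longrightarrow> 0 < Re (conjugate v \<bullet> (P *\<^sub>v v))"
      using pd unfolding pd_cmat_def by (elim conjE)
    have "0 < Re (conjugate u \<bullet> (P *\<^sub>v u))" using bspec[OF pos[unfolded dr] u] False by (rule mp)
    then show ?thesis using eq by simp
  qed
qed

definition blk :: "nat \<Rightarrow> nat \<Rightarrow> (nat \<Rightarrow> complex mat) \<Rightarrow> complex mat" where
  "blk m T F = mat (m*T) (m*T) (\<lambda>(r, c). if r div T = c div T then F (r div T) $$ (r mod T, c mod T) else 0)"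

lemma lt_blk: fixes k m s T :: nat assumes "k < m" "s < T" shows "k*T + s < m*T"
proof -
  have "Suc k * T \<le> m * T" using mult_le_mono1[of "Suc k" m T] assms(1) by simp
  then show ?thesis using assms(2) by simp
qed

lemma divmod_blk: fixes k s T :: nat assumes "s < T" shows "(k*T+s) div T = k" "(k*T+s) mod T = s"
  using assms by simp_all

lemma inj_blk: fixes k k' s t T :: nat assumes "s < T" "t < T"
  shows "(k*T+s = k'*T+t) = (k = k' \<and> s = t)"
proof
  assume e: "k*T+s = k'*T+t"
  have "k = k'" using divmod_blk(1)[OF assms(1), of k] divmod_blk(1)[OF assms(2), of k'] e by simp
  moreover have "s = t" using divmod_blk(2)[OF assms(1), of k] divmod_blk(2)[OF assms(2), of k'] e by simp
  ultimately show "k = k' \<and> s = t" by (rule conjI)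
qed simp

lemma decomp_blk: fixes i m T :: nat assumes "i < m*T"
  shows "i div T < m" "i mod T < T" "i = (i div T)*T + i mod T"
proof -
  have T: "0 < T" using assms by (cases T) simp_all
  show "i div T < m" using assms by (simp add: less_mult_imp_div_less)
  show "i mod T < T" using T by simp
  show "i = (i div T)*T + i mod T" by simp
qed

lemma blk_carrier: "blk m T F \<in> carrier_mat (m*T) (m*T)"
  unfolding blk_def by simp

lemma blk_entry: fixes k k' s t m T :: nat assumes "k < m" "k' < m" "s < T" "t < T"
  shows "blk m T F $$ (k*T+s, k'*T+t) = (if k = k' then F k $$ (s,t) else 0)"
  unfolding blk_def using lt_blk[OF assms(1,3)] lt_blk[OF assms(2,4)]
  by (simp add: divmod_blk[OF assms(3)] divmod_blk[OF assms(4)] assms(3,4))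

lemma blk_eqI:
  fixes X Y :: "complex mat"
  assumes X: "X \<in> carrier_mat (m*T) (m*T)" and Y: "Y \<in> carrier_mat (m*T) (m*T)"
    and e: "\<And>k k' s t. k < m \<Longrightarrow> k' < m \<Longrightarrow> s < T \<Longrightarrow> t < T \<Longrightarrow> X $$ (k*T+s, k'*T+t) = Y $$ (k*T+s, k'*T+t)"
  shows "X = Y"
proof (rule eq_matI)
  fix i j assume i: "i < dim_row Y" and j: "j < dim_col Y"
  have i': "i < m*T" using i Y by simp
  have j': "j < m*T" using j Y by simp
  have "X $$ ((i div T)*T + i mod T, (j div T)*T + j mod T) = Y $$ ((i div T)*T + i mod T, (j div T)*T + j mod T)"
    by (rule e[OF decomp_blk(1)[OF i'] decomp_blk(1)[OF j'] decomp_blk(2)[OF i'] decomp_blk(2)[OF j']])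
  then show "X $$ (i, j) = Y $$ (i, j)" using decomp_blk(3)[OF i', symmetric] decomp_blk(3)[OF j', symmetric] by simp
next
  show "dim_row X = dim_row Y" using X Y by simp
next
  show "dim_col X = dim_col Y" using X Y by simp
qed

lemma blk_cong: assumes "\<And>k. k < m \<Longrightarrow> F k = G k" shows "blk m T F = blk m T G"
  by (rule blk_eqI[OF blk_carrier blk_carrier]) (simp add: blk_entry assms)

lemma blk_one: "blk m T (\<lambda>k. 1\<^sub>m T) = 1\<^sub>m (m*T)"
proof (rule blk_eqI[OF blk_carrier])
  show "1\<^sub>m (m * T) \<in> carrier_mat (m * T) (m * T)" by simp
  fix k k' s t assume a: "k < m" "k' < m" "s < T" "t < T"
  show "blk m T (\<lambda>k. 1\<^sub>m T) $$ (k*T+s, k'*T+t) = 1\<^sub>m (m*T) $$ (k*T+s, k'*T+t)"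
    using a lt_blk[OF a(1,3)] lt_blk[OF a(2,4)] by (simp add: blk_entry inj_blk)
qed

lemma blk_mult:
  assumes F: "\<And>k. k < m \<Longrightarrow> F k \<in> carrier_mat T T" and G: "\<And>k. k < m \<Longrightarrow> G k \<in> carrier_mat T T"
  shows "blk m T F * blk m T G = blk m T (\<lambda>k. F k * G k)"
proof (rule blk_eqI)
  show "blk m T F * blk m T G \<in> carrier_mat (m*T) (m*T)" using blk_carrier[of m T F] blk_carrier[of m T G] by simp
  show "blk m T (\<lambda>k. F k * G k) \<in> carrier_mat (m*T) (m*T)" by (rule blk_carrier)
  fix k k' s t assume a: "k < m" "k' < m" "s < T" "t < T"
  have "(blk m T F * blk m T G) $$ (k*T+s, k'*T+t) = (\<Sum>u<m*T. blk m T F $$ (k*T+s, u) * blk m T G $$ (u, k'*T+t))"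
    by (rule mult_entry[OF blk_carrier blk_carrier lt_blk[OF a(1,3)] lt_blk[OF a(2,4)]])
  also have "\<dots> = (\<Sum>k2<m. \<Sum>s2<T. blk m T F $$ (k*T+s, k2*T+s2) * blk m T G $$ (k2*T+s2, k'*T+t))"
    by (rule sum_reindex_blocks)
  also have "\<dots> = (\<Sum>k2<m. if k2 = k then (\<Sum>s2<T. F k $$ (s, s2) * (if k = k' then G k $$ (s2, t) else 0)) else 0)"
  proof (rule sum.cong[OF refl])
    fix k2 assume k2: "k2 \<in> {..<m}"
    show "(\<Sum>s2<T. blk m T F $$ (k*T+s, k2*T+s2) * blk m T G $$ (k2*T+s2, k'*T+t)) =
      (if k2 = k then (\<Sum>s2<T. F k $$ (s, s2) * (if k = k' then G k $$ (s2, t) else 0)) else 0)"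
      using k2 a by (cases "k2 = k") (simp_all add: blk_entry)
  qed
  also have "\<dots> = (\<Sum>s2<T. F k $$ (s, s2) * (if k = k' then G k $$ (s2, t) else 0))"
    using a(1) by (simp add: sum.delta)
  also have "\<dots> = blk m T (\<lambda>k. F k * G k) $$ (k*T+s, k'*T+t)"
  proof (cases "k = k'")
    case True
    have "(F k * G k) $$ (s,t) = (\<Sum>s2<T. F k $$ (s,s2) * G k $$ (s2,t))"
      by (rule mult_entry[OF F[OF a(1)] G[OF a(1)] a(3) a(4)])
    then show ?thesis using True a by (simp add: blk_entry)
  next
    case False
    then show ?thesis using a by (simp add: blk_entry)
  qed
  finally show "(blk m T F * blk m T G) $$ (k*T+s, k'*T+t) = blk m T (\<lambda>k. F k * G k) $$ (k*T+s, k'*T+t)" .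
qed

lemma Bsel_carrier: "Bsel m T i \<in> carrier_mat (m*T) T"
  unfolding Bsel_def by simp

lemma Bsel_entry: "u < m*T \<Longrightarrow> q < T \<Longrightarrow> Bsel m T i $$ (u, q) = (if u = i*T+q then 1 else 0)"
  unfolding Bsel_def by simp

lemma sel_entry:
  fixes M :: "complex mat"
  assumes M: "M \<in> carrier_mat (m*T) (m*T)" and i: "i < m" and j: "j < m" and p: "p < T" and q: "q < T"
  shows "(transpose_mat (Bsel m T j) * M * Bsel m T i) $$ (p, q) = M $$ (j*T+p, i*T+q)"
proof -
  have Bt: "transpose_mat (Bsel m T j) \<in> carrier_mat T (m*T)" using Bsel_carrier[of m T j] by simp
  have X: "transpose_mat (Bsel m T j) * M \<in> carrier_mat T (m*T)" using Bt M by simp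
  have iq: "i*T+q < m*T" by (rule lt_blk[OF i q])
  have jp: "j*T+p < m*T" by (rule lt_blk[OF j p])
  have "(transpose_mat (Bsel m T j) * M * Bsel m T i) $$ (p, q) =
      (\<Sum>u<m*T. (transpose_mat (Bsel m T j) * M) $$ (p, u) * Bsel m T i $$ (u, q))"
    by (rule mult_entry[OF X Bsel_carrier p q])
  also have "\<dots> = (\<Sum>u<m*T. if u = i*T+q then (transpose_mat (Bsel m T j) * M) $$ (p, i*T+q) else 0)"
    by (rule sum.cong[OF refl]) (simp add: Bsel_entry q)
  also have "\<dots> = (transpose_mat (Bsel m T j) * M) $$ (p, i*T+q)"
    using iq by (simp add: sum.delta)
  also have "\<dots> = (\<Sum>r<m*T. transpose_mat (Bsel m T j) $$ (p, r) * M $$ (r, i*T+q))"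
    by (rule mult_entry[OF Bt M p iq])
  also have "\<dots> = (\<Sum>r<m*T. if r = j*T+p then M $$ (j*T+p, i*T+q) else 0)"
  proof (rule sum.cong[OF refl])
    fix r assume r: "r \<in> {..<m*T}"
    have "transpose_mat (Bsel m T j) $$ (p, r) = Bsel m T j $$ (r, p)"
      using r p Bsel_carrier[of m T j] by simp
    then show "transpose_mat (Bsel m T j) $$ (p, r) * M $$ (r, i*T+q) = (if r = j*T+p then M $$ (j*T+p, i*T+q) else 0)"
      using r p by (simp add: Bsel_entry)
  qed
  also have "\<dots> = M $$ (j*T+p, i*T+q)"
    using jp by (simp add: sum.delta)
  finally show ?thesis .
qed

lemma sel_carrier:
  fixes M :: "complex mat"
  assumes M: "M \<in> carrier_mat (m*T) (m*T)"
  shows "transpose_mat (Bsel m T j) * M * Bsel m T i \<in> carrier_mat T T"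
  using Bsel_carrier[of m T j] Bsel_carrier[of m T i] M by simp

lemma P_entry:
  fixes A :: "complex mat" and Q :: "nat \<Rightarrow> complex mat"
  assumes A: "A \<in> carrier_mat (m*T) (m*T)" and Q: "\<And>k. k < m \<Longrightarrow> Q k \<in> carrier_mat T T"
    and x: "x < m*T" and y: "y < m*T"
  shows "(mat_adjoint A * blk m T Q * A) $$ (x, y) =
    (\<Sum>k<m. \<Sum>t<T. (\<Sum>s<T. cnj (A $$ (k*T+s, x)) * Q k $$ (s, t)) * A $$ (k*T+t, y))"
proof -
  have aA: "mat_adjoint A \<in> carrier_mat (m*T) (m*T)" by (rule adj_carrier[OF A])
  have AQc: "mat_adjoint A * blk m T Q \<in> carrier_mat (m*T) (m*T)" using aA blk_carrier[of m T Q] by simp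
  have AQ: "(mat_adjoint A * blk m T Q) $$ (x, k*T+t) = (\<Sum>s<T. cnj (A $$ (k*T+s, x)) * Q k $$ (s, t))"
    if k: "k < m" and t: "t < T" for k t
  proof -
    have "(mat_adjoint A * blk m T Q) $$ (x, k*T+t) = (\<Sum>r<m*T. mat_adjoint A $$ (x, r) * blk m T Q $$ (r, k*T+t))"
      by (rule mult_entry[OF aA blk_carrier x lt_blk[OF k t]])
    also have "\<dots> = (\<Sum>k2<m. \<Sum>s<T. mat_adjoint A $$ (x, k2*T+s) * blk m T Q $$ (k2*T+s, k*T+t))"
      by (rule sum_reindex_blocks)
    also have "\<dots> = (\<Sum>k2<m. if k2 = k then (\<Sum>s<T. cnj (A $$ (k*T+s, x)) * Q k $$ (s, t)) else 0)"
    proof (rule sum.cong[OF refl])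
      fix k2 assume k2: "k2 \<in> {..<m}"
      have "mat_adjoint A $$ (x, k2*T+s) = cnj (A $$ (k2*T+s, x))" if s: "s < T" for s
        by (rule adj_entry) (use A x lt_blk[OF _ s, of k2 m] k2 in simp_all)
      then show "(\<Sum>s<T. mat_adjoint A $$ (x, k2*T+s) * blk m T Q $$ (k2*T+s, k*T+t)) =
          (if k2 = k then (\<Sum>s<T. cnj (A $$ (k*T+s, x)) * Q k $$ (s, t)) else 0)"
        using k2 k t by (cases "k2 = k") (simp_all add: blk_entry)
    qed
    also have "\<dots> = (\<Sum>s<T. cnj (A $$ (k*T+s, x)) * Q k $$ (s, t))"
      using k by (simp add: sum.delta)
    finally show ?thesis .
  qed
  have "(mat_adjoint A * blk m T Q * A) $$ (x, y) = (\<Sum>u<m*T. (mat_adjoint A * blk m T Q) $$ (x, u) * A $$ (u, y))"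
    by (rule mult_entry[OF AQc A x y])
  also have "\<dots> = (\<Sum>k<m. \<Sum>t<T. (mat_adjoint A * blk m T Q) $$ (x, k*T+t) * A $$ (k*T+t, y))"
    by (rule sum_reindex_blocks)
  also have "\<dots> = (\<Sum>k<m. \<Sum>t<T. (\<Sum>s<T. cnj (A $$ (k*T+s, x)) * Q k $$ (s, t)) * A $$ (k*T+t, y))"
    by (rule sum.cong[OF refl], rule sum.cong[OF refl]) (simp add: AQ)
  finally show ?thesis .
qed

lemma sum3_swap: "(\<Sum>p\<in>A. \<Sum>q\<in>B. \<Sum>k\<in>C. f p q k) = (\<Sum>k\<in>C. \<Sum>p\<in>A. \<Sum>q\<in>B. f p q k)"
proof -
  have "(\<Sum>p\<in>A. \<Sum>q\<in>B. \<Sum>k\<in>C. f p q k) = (\<Sum>p\<in>A. \<Sum>k\<in>C. \<Sum>q\<in>B. f p q k)"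
    by (rule sum.cong[OF refl]) (rule sum.swap)
  also have "\<dots> = (\<Sum>k\<in>C. \<Sum>p\<in>A. \<Sum>q\<in>B. f p q k)" by (rule sum.swap)
  finally show ?thesis .
qed

lemma quad_expand:
  fixes R :: "complex mat"
  assumes R: "R \<in> carrier_mat n n" and v: "v \<in> carrier_vec n"
  shows "conjugate v \<bullet> (R *\<^sub>v v) = (\<Sum>p<n. \<Sum>q<n. cnj (v $ p) * R $$ (p, q) * v $ q)"
  using R v by (simp add: scalar_prod_def lessThan_atLeast0 sum_distrib_left mult.assoc)

lemma adj_quad:
  fixes M :: "complex mat"
  assumes M: "M \<in> carrier_mat r c" and v: "v \<in> carrier_vec c" and u: "u \<in> carrier_vec r"
  shows "conjugate v \<bullet> (mat_adjoint M *\<^sub>v u) = conjugate (M *\<^sub>v v) \<bullet> u"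
proof -
  have aM: "mat_adjoint M \<in> carrier_mat c r" by (rule adj_carrier[OF M])
  have "conjugate v \<bullet> (mat_adjoint M *\<^sub>v u) = (\<Sum>i<c. cnj (v $ i) * (\<Sum>j<r. mat_adjoint M $$ (i, j) * u $ j))"
    using aM v u by (simp add: scalar_prod_def lessThan_atLeast0)
  also have "\<dots> = (\<Sum>i<c. \<Sum>j<r. cnj (v $ i) * cnj (M $$ (j, i)) * u $ j)"
  proof (rule sum.cong[OF refl])
    fix i assume i: "i \<in> {..<c}"
    have "(\<Sum>j<r. mat_adjoint M $$ (i, j) * u $ j) = (\<Sum>j<r. cnj (M $$ (j, i)) * u $ j)"
      by (rule sum.cong[OF refl]) (use M i in \<open>simp add: adj_entry\<close>)
    then show "cnj (v $ i) * (\<Sum>j<r. mat_adjoint M $$ (i, j) * u $ j) = (\<Sum>j<r. cnj (v $ i) * cnj (M $$ (j, i)) * u $ j)"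
      by (simp add: sum_distrib_left mult.assoc)
  qed
  also have "\<dots> = (\<Sum>j<r. \<Sum>i<c. cnj (v $ i) * cnj (M $$ (j, i)) * u $ j)" by (rule sum.swap)
  also have "\<dots> = (\<Sum>j<r. cnj (\<Sum>i<c. M $$ (j, i) * v $ i) * u $ j)"
    by (rule sum.cong[OF refl]) (simp add: sum_distrib_right sum_distrib_left mult_ac)
  also have "\<dots> = (\<Sum>j<r. cnj ((M *\<^sub>v v) $ j) * u $ j)"
    by (rule sum.cong[OF refl]) (use M v in \<open>simp add: scalar_prod_def lessThan_atLeast0\<close>)
  also have "\<dots> = conjugate (M *\<^sub>v v) \<bullet> u"
    using M u by (simp add: scalar_prod_def lessThan_atLeast0)
  finally show ?thesis .
qed

lemma lin_quad:
  fixes R :: "complex mat" and M :: "nat \<Rightarrow> complex mat" and g :: "nat \<Rightarrow> complex"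
  assumes R: "R \<in> carrier_mat n n" and M: "\<And>k. k < m \<Longrightarrow> M k \<in> carrier_mat n n"
    and e: "\<And>p q. p < n \<Longrightarrow> q < n \<Longrightarrow> R $$ (p, q) = (\<Sum>k<m. g k * M k $$ (p, q))"
    and v: "v \<in> carrier_vec n"
  shows "conjugate v \<bullet> (R *\<^sub>v v) = (\<Sum>k<m. g k * (conjugate v \<bullet> (M k *\<^sub>v v)))"
proof -
  have "conjugate v \<bullet> (R *\<^sub>v v) = (\<Sum>p<n. \<Sum>q<n. cnj (v $ p) * R $$ (p, q) * v $ q)"
    by (rule quad_expand[OF R v])
  also have "\<dots> = (\<Sum>p<n. \<Sum>q<n. \<Sum>k<m. g k * (cnj (v $ p) * M k $$ (p, q) * v $ q))"
    by (rule sum.cong[OF refl], rule sum.cong[OF refl])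
      (simp add: e sum_distrib_left sum_distrib_right mult.assoc mult.left_commute)
  also have "\<dots> = (\<Sum>k<m. \<Sum>p<n. \<Sum>q<n. g k * (cnj (v $ p) * M k $$ (p, q) * v $ q))"
    by (rule sum3_swap)
  also have "\<dots> = (\<Sum>k<m. g k * (conjugate v \<bullet> (M k *\<^sub>v v)))"
  proof (rule sum.cong[OF refl])
    fix k assume k: "k \<in> {..<m}"
    have "conjugate v \<bullet> (M k *\<^sub>v v) = (\<Sum>p<n. \<Sum>q<n. cnj (v $ p) * M k $$ (p, q) * v $ q)"
      using k by (intro quad_expand[OF M v]) simp
    then show "(\<Sum>p<n. \<Sum>q<n. g k * (cnj (v $ p) * M k $$ (p, q) * v $ q)) = g k * (conjugate v \<bullet> (M k *\<^sub>v v))"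
      by (simp add: sum_distrib_left)
  qed
  finally show ?thesis .
qed

lemma key:
  fixes A :: "complex mat" and Q :: "nat \<Rightarrow> complex mat" and G :: "nat \<Rightarrow> nat \<Rightarrow> nat \<Rightarrow> complex"
    and c :: "nat \<Rightarrow> nat \<Rightarrow> real"
  assumes A: "A \<in> carrier_mat (m*T) (m*T)"
    and Aent: "\<And>k k' s t. k < m \<Longrightarrow> k' < m \<Longrightarrow> s < T \<Longrightarrow> t < T \<Longrightarrow>
        A $$ (k*T+s, k'*T+t) = (if k = k' \<and> s = t then 1 else 0) - complex_of_real (c k k') * G k s t"
    and i: "i < m" and j: "j < m" and ij: "i \<noteq> j"
    and cij: "c i j = 0" and cji: "c j i = 0"
    and gnn: "\<And>k. k < m \<Longrightarrow> 0 \<le> c k j * c k i"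
    and Qc: "\<And>k. k < m \<Longrightarrow> Q k \<in> carrier_mat T T"
    and Qh: "\<And>k. k < m \<Longrightarrow> mat_adjoint (Q k) = Q k"
    and Qp: "\<And>k w. k < m \<Longrightarrow> w \<in> carrier_vec T \<Longrightarrow> 0 \<le> Re (conjugate w \<bullet> (Q k *\<^sub>v w))"
  shows "psd_cmat (transpose_mat (Bsel m T j) * (mat_adjoint A * blk m T Q * A) * Bsel m T i)"
proof -
  define Gm where "Gm k = mat T T (\<lambda>(s, p). G k s p)" for k
  define M where "M k = mat_adjoint (Gm k) * Q k * Gm k" for k
  define R where "R = transpose_mat (Bsel m T j) * (mat_adjoint A * blk m T Q * A) * Bsel m T i"
  define P where "P = mat_adjoint A * blk m T Q * A"
  have Gmc: "Gm k \<in> carrier_mat T T" for k unfolding Gm_def by simp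
  have aGmc: "mat_adjoint (Gm k) \<in> carrier_mat T T" for k by (rule adj_carrier[OF Gmc])
  have Mc: "M k \<in> carrier_mat T T" if k: "k < m" for k
    unfolding M_def using aGmc[of k] Qc[OF k] Gmc[of k] by simp
  have Pc: "P \<in> carrier_mat (m*T) (m*T)"
    unfolding P_def using adj_carrier[OF A] blk_carrier[of m T Q] A by simp
  have Rc: "R \<in> carrier_mat T T" unfolding R_def by (rule sel_carrier[OF Pc[unfolded P_def]])
  have Ment: "M k $$ (p, q) = (\<Sum>t<T. (\<Sum>s<T. cnj (G k s p) * Q k $$ (s, t)) * G k t q)"
    if k: "k < m" and p: "p < T" and q: "q < T" for k p q
  proof -
    have aQ: "mat_adjoint (Gm k) * Q k \<in> carrier_mat T T" using aGmc[of k] Qc[OF k] by simp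
    have "M k $$ (p, q) = (\<Sum>t<T. (mat_adjoint (Gm k) * Q k) $$ (p, t) * Gm k $$ (t, q))"
      unfolding M_def by (rule mult_entry[OF aQ Gmc p q])
    also have "\<dots> = (\<Sum>t<T. (\<Sum>s<T. cnj (G k s p) * Q k $$ (s, t)) * G k t q)"
    proof (rule sum.cong[OF refl])
      fix t assume t: "t \<in> {..<T}"
      have "(mat_adjoint (Gm k) * Q k) $$ (p, t) = (\<Sum>s<T. mat_adjoint (Gm k) $$ (p, s) * Q k $$ (s, t))"
        using t by (intro mult_entry[OF aGmc Qc[OF k] p]) simp
      also have "\<dots> = (\<Sum>s<T. cnj (G k s p) * Q k $$ (s, t))"
        by (rule sum.cong[OF refl]) (use p Gmc[of k] in \<open>simp add: adj_entry Gm_def\<close>)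
      finally show "(mat_adjoint (Gm k) * Q k) $$ (p, t) * Gm k $$ (t, q) = (\<Sum>s<T. cnj (G k s p) * Q k $$ (s, t)) * G k t q"
        using t q by (simp add: Gm_def)
    qed
    finally show ?thesis .
  qed
  have inner: "(\<Sum>t<T. (\<Sum>s<T. cnj (A $$ (k*T+s, j*T+p)) * Q k $$ (s, t)) * A $$ (k*T+t, i*T+q))
      = complex_of_real (c k j * c k i) * M k $$ (p, q)"
    if k: "k < m" and p: "p < T" and q: "q < T" for k p q
  proof (cases "k = i")
    case True
    have "A $$ (k*T+s, j*T+p) = 0" if s: "s < T" for s
      using Aent[OF k j s p] True ij cij by simp
    then show ?thesis using True cij by simp
  next
    case ki: False
    have a2: "A $$ (k*T+t, i*T+q) = - complex_of_real (c k i) * G k t q" if t: "t < T" for t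
      using Aent[OF k i t q] ki by simp
    show ?thesis
    proof (cases "k = j")
      case True
      then show ?thesis using a2 cji by simp
    next
      case kj: False
      have a1: "A $$ (k*T+s, j*T+p) = - complex_of_real (c k j) * G k s p" if s: "s < T" for s
        using Aent[OF k j s p] kj by simp
      have "(\<Sum>t<T. (\<Sum>s<T. cnj (A $$ (k*T+s, j*T+p)) * Q k $$ (s, t)) * A $$ (k*T+t, i*T+q))
        = (\<Sum>t<T. (\<Sum>s<T. complex_of_real (- c k j) * (cnj (G k s p) * Q k $$ (s, t))) * (complex_of_real (- c k i) * G k t q))"
        by (rule sum.cong[OF refl]) (simp add: a1 a2 mult.assoc)
      also have "\<dots> = (\<Sum>t<T. complex_of_real (c k j * c k i) * ((\<Sum>s<T. cnj (G k s p) * Q k $$ (s, t)) * G k t q))"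
        by (rule sum.cong[OF refl]) (simp only: sum_distrib_left[symmetric], simp add: mult_ac)
      also have "\<dots> = complex_of_real (c k j * c k i) * M k $$ (p, q)"
        by (simp add: Ment[OF k p q] sum_distrib_left)
      finally show ?thesis .
    qed
  qed
  have Rent: "R $$ (p, q) = (\<Sum>k<m. complex_of_real (c k j * c k i) * M k $$ (p, q))"
    if p: "p < T" and q: "q < T" for p q
  proof -
    have "R $$ (p, q) = P $$ (j*T+p, i*T+q)"
      unfolding R_def P_def by (rule sel_entry[OF Pc[unfolded P_def] i j p q])
    also have "\<dots> = (\<Sum>k<m. \<Sum>t<T. (\<Sum>s<T. cnj (A $$ (k*T+s, j*T+p)) * Q k $$ (s, t)) * A $$ (k*T+t, i*T+q))"
      unfolding P_def by (rule P_entry[OF A Qc lt_blk[OF j p] lt_blk[OF i q]])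
    also have "\<dots> = (\<Sum>k<m. complex_of_real (c k j * c k i) * M k $$ (p, q))"
      by (rule sum.cong[OF refl]) (simp add: inner p q)
    finally show ?thesis .
  qed
  have Mh: "mat_adjoint (M k) = M k" if k: "k < m" for k
  proof -
    have "mat_adjoint (M k) = mat_adjoint (Gm k) * mat_adjoint (mat_adjoint (Gm k) * Q k)"
      unfolding M_def by (rule adj_mult[OF mult_carrier_mat[OF aGmc Qc[OF k]] Gmc])
    also have "mat_adjoint (mat_adjoint (Gm k) * Q k) = mat_adjoint (Q k) * mat_adjoint (mat_adjoint (Gm k))"
      by (rule adj_mult[OF aGmc Qc[OF k]])
    also have "\<dots> = Q k * Gm k" by (simp add: adj_adj Qh[OF k])
    also have "mat_adjoint (Gm k) * (Q k * Gm k) = M k"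
      unfolding M_def by (rule assoc_mult_mat[OF aGmc Qc[OF k] Gmc, symmetric])
    finally show ?thesis .
  qed
  have herm: "mat_adjoint R = R"
  proof (rule eq_matI)
    fix p q assume p: "p < dim_row R" and q: "q < dim_col R"
    have p': "p < T" and q': "q < T" using p q Rc by simp_all
    have "mat_adjoint R $$ (p, q) = cnj (R $$ (q, p))"
      by (rule adj_entry) (use p q Rc in simp_all)
    also have "\<dots> = (\<Sum>k<m. complex_of_real (c k j * c k i) * cnj (M k $$ (q, p)))"
      by (simp add: Rent[OF q' p'])
    also have "\<dots> = (\<Sum>k<m. complex_of_real (c k j * c k i) * M k $$ (p, q))"
    proof (rule sum.cong[OF refl])
      fix k assume k: "k \<in> {..<m}"
      have "cnj (M k $$ (q, p)) = mat_adjoint (M k) $$ (p, q)"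
        by (rule adj_entry[symmetric]) (use k p' q' Mc[of k] in simp_all)
      then show "complex_of_real (c k j * c k i) * cnj (M k $$ (q, p)) = complex_of_real (c k j * c k i) * M k $$ (p, q)"
        using k by (simp add: Mh)
    qed
    also have "\<dots> = R $$ (p, q)" by (rule Rent[OF p' q', symmetric])
    finally show "mat_adjoint R $$ (p, q) = R $$ (p, q)" .
  qed (use Rc in \<open>simp_all add: adj_dims\<close>)
  have quad: "0 \<le> Re (conjugate v \<bullet> (R *\<^sub>v v))" if v: "v \<in> carrier_vec T" for v
  proof -
    have eq: "conjugate v \<bullet> (R *\<^sub>v v) = (\<Sum>k<m. complex_of_real (c k j * c k i) * (conjugate v \<bullet> (M k *\<^sub>v v)))"
      by (rule lin_quad[OF Rc Mc Rent v])
    have nn: "0 \<le> Re (conjugate v \<bullet> (M k *\<^sub>v v))" if k: "k < m" for k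
    proof -
      have Gv: "Gm k *\<^sub>v v \<in> carrier_vec T" using Gmc[of k] v by simp
      have QG: "Q k * Gm k \<in> carrier_mat T T" using Qc[OF k] Gmc[of k] by simp
      have "M k = mat_adjoint (Gm k) * (Q k * Gm k)"
        unfolding M_def by (rule assoc_mult_mat[OF aGmc Qc[OF k] Gmc])
      then have "M k *\<^sub>v v = mat_adjoint (Gm k) *\<^sub>v (Q k *\<^sub>v (Gm k *\<^sub>v v))"
        using assoc_mult_mat_vec[OF aGmc QG v] assoc_mult_mat_vec[OF Qc[OF k] Gmc v] by simp
      then have "conjugate v \<bullet> (M k *\<^sub>v v) = conjugate (Gm k *\<^sub>v v) \<bullet> (Q k *\<^sub>v (Gm k *\<^sub>v v))"
        using adj_quad[OF Gmc v] Qc[OF k] Gv by simp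
      then show ?thesis using Qp[OF k Gv] by simp
    qed
    have "Re (conjugate v \<bullet> (R *\<^sub>v v)) = (\<Sum>k<m. (c k j * c k i) * Re (conjugate v \<bullet> (M k *\<^sub>v v)))"
      unfolding eq Re_sum by (rule sum.cong[OF refl]) simp
    also have "0 \<le> \<dots>"
      by (rule sum_nonneg) (use gnn nn in \<open>simp add: mult_nonneg_nonneg\<close>)
    finally show ?thesis by simp
  qed
  show ?thesis unfolding R_def[symmetric] psd_cmat_def hermitian_cmat_def
    using Rc herm quad by simp
qed

lemma sandwich:
  fixes A Ai D Di :: "complex mat"
  assumes Ac: "A \<in> carrier_mat n n" and Aic: "Ai \<in> carrier_mat n n"
    and Dc: "D \<in> carrier_mat n n" and Dic: "Di \<in> carrier_mat n n"
    and AAi: "A * Ai = 1\<^sub>m n" and AiA: "Ai * A = 1\<^sub>m n"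
    and DDi: "D * Di = 1\<^sub>m n" and DiD: "Di * D = 1\<^sub>m n"
  shows "cmat_inv (Ai * D * mat_adjoint Ai) = mat_adjoint A * Di * A"
proof -
  have aAc: "mat_adjoint A \<in> carrier_mat n n" by (rule adj_carrier[OF Ac])
  have aAic: "mat_adjoint Ai \<in> carrier_mat n n" by (rule adj_carrier[OF Aic])
  have h1: "mat_adjoint Ai * mat_adjoint A = 1\<^sub>m n"
    using adj_mult[OF Ac Aic] AAi by (simp add: adj_one)
  have h2: "mat_adjoint A * mat_adjoint Ai = 1\<^sub>m n"
    using adj_mult[OF Aic Ac] AiA by (simp add: adj_one)
  have AiDc: "Ai * D \<in> carrier_mat n n" using Aic Dc by simp
  have Xc: "Ai * D * mat_adjoint Ai \<in> carrier_mat n n" using AiDc aAic by simp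
  have DiAc: "Di * A \<in> carrier_mat n n" using Dic Ac by simp
  have aADic: "mat_adjoint A * Di \<in> carrier_mat n n" using aAc Dic by simp
  have Yc: "mat_adjoint A * Di * A \<in> carrier_mat n n" using aADic Ac by simp
  have DaAic: "D * mat_adjoint Ai \<in> carrier_mat n n" using Dc aAic by simp
  have XY: "(Ai * D * mat_adjoint Ai) * (mat_adjoint A * Di * A) = 1\<^sub>m n"
  proof -
    have "(Ai * D * mat_adjoint Ai) * (mat_adjoint A * Di * A) = (Ai * D * mat_adjoint Ai) * (mat_adjoint A * (Di * A))"
      by (simp only: assoc_mult_mat[OF aAc Dic Ac])
    also have "\<dots> = (Ai * D * mat_adjoint Ai * mat_adjoint A) * (Di * A)"
      by (rule assoc_mult_mat[OF Xc aAc DiAc, symmetric])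
    also have "\<dots> = (Ai * D * (mat_adjoint Ai * mat_adjoint A)) * (Di * A)"
      by (simp only: assoc_mult_mat[OF AiDc aAic aAc])
    also have "\<dots> = (Ai * D) * (Di * A)"
      by (simp only: h1 right_mult_one_mat[OF AiDc])
    also have "\<dots> = Ai * (D * (Di * A))"
      by (rule assoc_mult_mat[OF Aic Dc DiAc])
    also have "\<dots> = Ai * ((D * Di) * A)"
      by (simp only: assoc_mult_mat[OF Dc Dic Ac])
    also have "\<dots> = 1\<^sub>m n"
      by (simp only: DDi AiA left_mult_one_mat[OF Ac])
    finally show ?thesis .
  qed
  have YX: "(mat_adjoint A * Di * A) * (Ai * D * mat_adjoint Ai) = 1\<^sub>m n"
  proof -
    have "(mat_adjoint A * Di * A) * (Ai * D * mat_adjoint Ai) = (mat_adjoint A * Di * A) * (Ai * (D * mat_adjoint Ai))"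
      by (simp only: assoc_mult_mat[OF Aic Dc aAic])
    also have "\<dots> = (mat_adjoint A * Di * A * Ai) * (D * mat_adjoint Ai)"
      by (rule assoc_mult_mat[OF Yc Aic DaAic, symmetric])
    also have "\<dots> = (mat_adjoint A * Di * (A * Ai)) * (D * mat_adjoint Ai)"
      by (simp only: assoc_mult_mat[OF aADic Ac Aic])
    also have "\<dots> = (mat_adjoint A * Di) * (D * mat_adjoint Ai)"
      by (simp only: AAi right_mult_one_mat[OF aADic])
    also have "\<dots> = mat_adjoint A * (Di * (D * mat_adjoint Ai))"
      by (rule assoc_mult_mat[OF aAc Dic DaAic])
    also have "\<dots> = mat_adjoint A * ((Di * D) * mat_adjoint Ai)"
      by (simp only: assoc_mult_mat[OF Dic Dc aAic])
    also have "\<dots> = 1\<^sub>m n"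
      by (simp only: DiD h2 left_mult_one_mat[OF aAic])
    finally show ?thesis .
  qed
  show ?thesis by (rule cmat_inv_unique[OF Xc Yc XY YX])
qed

lemma PhiE_blk_eq: "PhiE_blk PhiE m T w = blk m T (\<lambda>k. PhiE k w)"
  unfolding PhiE_blk_def blk_def by (rule refl)

theorem theorem3p1:
  fixes m T l :: nat and dt :: real
    and a :: "nat \<Rightarrow> nat \<Rightarrow> real" and b :: "nat \<Rightarrow> nat \<Rightarrow> real"
    and g :: "nat \<Rightarrow> int \<Rightarrow> real"
    and PhiE :: "nat \<Rightarrow> real \<Rightarrow> complex mat"
    and i j :: nat and \<omega> :: real
  assumes T_pos: "0 < T" and dt_pos: "0 < dt"
    and b_diag: "\<forall>k < m. b k k = 0"
    and b_nonneg: "\<forall>k < m. \<forall>k' < m. k \<noteq> k' \<longrightarrow> 0 \<le> b k k'"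
    and g_stable: "\<forall>k < m. (\<lambda>n. \<bar>g k n\<bar>) summable_on UNIV"
    and g_ztrans: "\<forall>k < m. \<forall>z. cmod z = 1 \<and> z \<noteq> -1 \<longrightarrow>
           Sden l a b m dt k z \<noteq> 0 \<and>
           ((\<lambda>n. of_real (g k n) * z powi (- n)) has_sum (1 / Sden l a b m dt k z)) UNIV"
    and PhiE_dim: "\<forall>k < m. \<forall>w. PhiE k w \<in> carrier_mat T T"
    and detectable: "\<forall>k < m. \<forall>w. pd_cmat (PhiE k w)"
    and well_posed: "AE w in lborel. invertible_mat (1\<^sub>m (m * T) - bigH b g m T w)"
    and ij: "i < m" "j < m" "i \<noteq> j"
    and two_hop: "i \<in> nbr2 b m j" "i \<notin> nbr b m j"
    and \<omega>_range: "\<omega> \<in> {0..<2 * pi}"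
    and defined: "invertible_mat (1\<^sub>m (m * T) - bigH b g m T \<omega>)"
  shows "psd_cmat (transpose_mat (Bsel m T j) * cmat_inv (PhiX b g PhiE m T \<omega>) * Bsel m T i)"
proof -
  define N where "N = m * T"
  define A where "A = 1\<^sub>m (m * T) - bigH b g m T \<omega>"
  define G where "G k s t = lift_fr (g k) T \<omega> s t" for k s t
  define Q where "Q k = cmat_inv (PhiE k \<omega>)" for k
  have Hc: "bigH b g m T \<omega> \<in> carrier_mat (m*T) (m*T)" unfolding bigH_def by simp
  have Ac: "A \<in> carrier_mat (m*T) (m*T)" unfolding A_def by (rule minus_carrier_mat[OF Hc])
  have Aent: "A $$ (k*T+s, k'*T+t) = (if k = k' \<and> s = t then 1 else 0) - complex_of_real (b k k') * G k s t"
    if k: "k < m" and k': "k' < m" and s: "s < T" and t: "t < T" for k k' s t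
  proof -
    have r: "k*T+s < m*T" by (rule lt_blk[OF k s])
    have c: "k'*T+t < m*T" by (rule lt_blk[OF k' t])
    have "A $$ (k*T+s, k'*T+t) = 1\<^sub>m (m * T) $$ (k*T+s, k'*T+t) - bigH b g m T \<omega> $$ (k*T+s, k'*T+t)"
      unfolding A_def using r c Hc by simp
    also have "bigH b g m T \<omega> $$ (k*T+s, k'*T+t) = complex_of_real (b k k') * G k s t"
      unfolding bigH_def G_def using r c by (simp add: divmod_blk[OF s] divmod_blk[OF t] s t)
    also have "1\<^sub>m (m * T) $$ (k*T+s, k'*T+t) = (if k = k' \<and> s = t then 1 else 0)"
      using r c by (simp add: inj_blk[OF s t])
    finally show ?thesis .
  qed
  have nb: "\<not> topo_edge b j i" using two_hop(2) ij(1) unfolding nbr_def by simp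
  have cij: "b i j = 0" and cji: "b j i = 0" using nb unfolding topo_edge_def by simp_all
  have gnn: "0 \<le> b k j * b k i" if k: "k < m" for k
  proof (cases "k = j")
    case True then show ?thesis using b_diag k by simp
  next
    case kj: False
    show ?thesis
    proof (cases "k = i")
      case True then show ?thesis using b_diag k by simp
    next
      case False
      then show ?thesis using b_nonneg k ij kj by (simp add: mult_nonneg_nonneg)
    qed
  qed
  have Pc: "PhiE k \<omega> \<in> carrier_mat T T" if k: "k < m" for k using PhiE_dim k by simp
  have pdk: "pd_cmat (PhiE k \<omega>)" if k: "k < m" for k using detectable k by simp
  have Qc: "Q k \<in> carrier_mat T T" if k: "k < m" for k
    unfolding Q_def by (rule inv_psd(1)[OF Pc[OF k] pdk[OF k]])
  have Qh: "mat_adjoint (Q k) = Q k" if k: "k < m" for k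
    unfolding Q_def by (rule inv_psd(2)[OF Pc[OF k] pdk[OF k]])
  have Qp: "0 \<le> Re (conjugate w \<bullet> (Q k *\<^sub>v w))" if k: "k < m" and w: "w \<in> carrier_vec T" for k w
    unfolding Q_def by (rule inv_psd(3)[OF Pc[OF k] pdk[OF k] w])
  have PQ: "PhiE k \<omega> * Q k = 1\<^sub>m T" if k: "k < m" for k
    unfolding Q_def by (rule cmat_inv_props(2)[OF Pc[OF k] pd_ex_inv[OF Pc[OF k] pdk[OF k]]])
  have QP: "Q k * PhiE k \<omega> = 1\<^sub>m T" if k: "k < m" for k
    unfolding Q_def by (rule cmat_inv_props(3)[OF Pc[OF k] pd_ex_inv[OF Pc[OF k] pdk[OF k]]])
  have DDi: "blk m T (\<lambda>k. PhiE k \<omega>) * blk m T Q = 1\<^sub>m (m*T)"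
  proof -
    have "blk m T (\<lambda>k. PhiE k \<omega>) * blk m T Q = blk m T (\<lambda>k. PhiE k \<omega> * Q k)"
      by (rule blk_mult[OF Pc Qc])
    also have "\<dots> = blk m T (\<lambda>k. 1\<^sub>m T)" by (rule blk_cong) (simp add: PQ)
    also have "\<dots> = 1\<^sub>m (m*T)" by (rule blk_one)
    finally show ?thesis .
  qed
  have DiD: "blk m T Q * blk m T (\<lambda>k. PhiE k \<omega>) = 1\<^sub>m (m*T)"
  proof -
    have "blk m T Q * blk m T (\<lambda>k. PhiE k \<omega>) = blk m T (\<lambda>k. Q k * PhiE k \<omega>)"
      by (rule blk_mult[OF Qc Pc])
    also have "\<dots> = blk m T (\<lambda>k. 1\<^sub>m T)" by (rule blk_cong) (simp add: QP)
    also have "\<dots> = 1\<^sub>m (m*T)" by (rule blk_one)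
    finally show ?thesis .
  qed
  have exA: "\<exists>B. B \<in> carrier_mat (m*T) (m*T) \<and> A * B = 1\<^sub>m (m*T) \<and> B * A = 1\<^sub>m (m*T)"
    by (rule invertible_ex[OF Ac]) (simp add: A_def defined)
  note Ai = cmat_inv_props[OF Ac exA]
  have "PhiX b g PhiE m T \<omega> = cmat_inv A * blk m T (\<lambda>k. PhiE k \<omega>) * mat_adjoint (cmat_inv A)"
    unfolding PhiX_def Let_def A_def[symmetric] PhiE_blk_eq by (rule refl)
  then have inv: "cmat_inv (PhiX b g PhiE m T \<omega>) = mat_adjoint A * blk m T Q * A"
    using sandwich[OF Ac Ai(1) blk_carrier blk_carrier Ai(2) Ai(3) DDi DiD] by simp
  show ?thesis unfolding inv
    by (rule key[OF Ac Aent ij(1) ij(2) ij(3) cij cji gnn Qc Qh Qp])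
qed

end
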